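(* Let $M=\begin{pmatrix}a&b\\c&d\end{pmatrix}$ be a random real $2\times2$ matrix whose rows are exchangeable, i.e. $(a,b,c,d)\overset{d}{=}(c,d,a,b)$. Then $\Pr(M\text{ has both eigenvalues real})\ge\frac12$. *)

theory Defs
  imports "HOL-Analysis.Analysis" "HOL-Probability.Probability"
begin

definition swap_rows :: "real^2^2 \<Rightarrow> real^2^2" where
  "swap_rows A = (\<chi> i. A $ (if i = 1 then 2 else 1))"

definition real_eigenvalues :: "real^2^2 \<Rightarrow> bool" where
  "real_eigenvalues A \<longleftrightarrow>
     (\<forall>z::complex. (\<exists>v::complex^2. v \<noteq> 0 \<and>
        (\<chi> i j. complex_of_real (A $ i $ j)) *v v = z *s v) \<longrightarrow> Im z = 0)"

end

theory Submission
  imports Defs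
begin

definition disc :: "real^2^2 \<Rightarrow> real" where
  "disc A = (A$1$1 - A$2$2)^2 + 4 * A$1$2 * A$2$1"

lemma one_ne_two2: "(1::2) \<noteq> 2" by simp

lemma eig_imp: 
  fixes a b c d :: complex and z p q :: complex
  assumes "p \<noteq> 0 \<or> q \<noteq> 0" "a * p + b * q = z * p" "c * p + d * q = z * q"
  shows "(a - z)*(d - z) - b*c = 0"
proof -
  have "((a - z)*(d - z) - b*c) * p = (d - z) * ((a-z)*p + b*q) - b * (c*p + (d-z)*q)"
    by (simp add: algebra_simps)
  also have "\<dots> = 0" using assms(2,3) by (simp add: algebra_simps)
  finally have 1: "((a - z)*(d - z) - b*c) * p = 0" .
  have "((a - z)*(d - z) - b*c) * q = (a - z) * (c*p + (d-z)*q) - c * ((a-z)*p + b*q)"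
    by (simp add: algebra_simps)
  also have "\<dots> = 0" using assms(2,3) by (simp add: algebra_simps)
  finally have 2: "((a - z)*(d - z) - b*c) * q = 0" .
  show ?thesis using 1 2 assms(1) by auto
qed

lemma real_eigenvalues_iff: "real_eigenvalues A \<longleftrightarrow> disc A \<ge> 0"
proof
  define a where "a = A$1$1" define b where "b = A$1$2"
  define c where "c = A$2$1" define d where "d = A$2$2"
  assume R: "real_eigenvalues A"
  show "disc A \<ge> 0"
  proof (rule ccontr)
    assume "\<not> disc A \<ge> 0"
    hence neg: "(a-d)^2 + 4*b*c < 0" by (simp add: disc_def a_def b_def c_def d_def)
    have "b \<noteq> 0" using neg by (smt (verit) mult_eq_0_iff zero_le_power2 mult_zero_right)
    define s where "s = sqrt (- ((a-d)^2 + 4*b*c))"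
    have s2: "s^2 = - ((a-d)^2 + 4*b*c)" using neg by (simp add: s_def)
    have spos: "s > 0" using neg by (simp add: s_def)
    define z where "z = Complex ((a+d)/2) (s/2)"
    define v where "v = (\<chi> i::2. if i = 1 then complex_of_real b else z - complex_of_real a)"
    have v1: "v$1 = b" and v2: "v$2 = z - a" using one_ne_two2 by (auto simp: v_def)
    have zq: "z*z - (a+d)*z + (a*d - b*c) = 0"
      using s2 by (simp add: z_def complex_eq_iff algebra_simps power2_eq_square) (simp add: field_simps)
    have "v \<noteq> 0" using \<open>b \<noteq> 0\<close> v1 by (metis zero_index of_real_eq_0_iff)
    moreover have "(\<chi> i j. complex_of_real (A $ i $ j)) *v v = z *s v"
      unfolding vec_eq_iff forall_2 matrix_vector_mult_def
      using zq by (simp add: sum_2 v1 v2 a_def[symmetric] b_def[symmetric] c_def[symmetric] d_def[symmetric] algebra_simps)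
    ultimately have "Im z = 0" using R unfolding real_eigenvalues_def by blast
    thus False using spos by (simp add: z_def)
  qed
next
  define a where "a = A$1$1" define b where "b = A$1$2"
  define c where "c = A$2$1" define d where "d = A$2$2"
  assume D: "disc A \<ge> 0"
  hence D': "(a-d)^2 + 4*b*c \<ge> 0" by (simp add: disc_def a_def b_def c_def d_def)
  show "real_eigenvalues A" unfolding real_eigenvalues_def
  proof (intro allI impI)
    fix z :: complex
    assume "\<exists>v::complex^2. v \<noteq> 0 \<and> (\<chi> i j. complex_of_real (A $ i $ j)) *v v = z *s v"
    then obtain v :: "complex^2" where nz: "v \<noteq> 0" and ev: "(\<chi> i j. complex_of_real (A $ i $ j)) *v v = z *s v" by blast
    have nz': "v$1 \<noteq> 0 \<or> v$2 \<noteq> 0" using nz by (auto simp: vec_eq_iff forall_2)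
    have e1: "a* v$1 + b* v$2 = z* v$1" and e2: "c* v$1 + d* v$2 = z* v$2"
      using ev unfolding vec_eq_iff forall_2 matrix_vector_mult_def
      by (simp_all add: sum_2 a_def b_def c_def d_def)
    have ch: "(complex_of_real a - z)*(complex_of_real d - z) - complex_of_real b * complex_of_real c = 0" by (rule eig_imp[OF nz' e1 e2])
    define w where "w = 2*z - (a+d)"
    have w2: "w*w = complex_of_real ((a-d)^2 + 4*b*c)"
    proof -
      have "w*w = 4*((complex_of_real a - z)*(complex_of_real d - z) - complex_of_real b * complex_of_real c) + complex_of_real ((a-d)^2 + 4*b*c)"
        unfolding w_def by (simp add: algebra_simps power2_eq_square)
      thus ?thesis using ch by simp
    qed
    have "Im w = 0"
    proof (rule ccontr)
      assume ni: "Im w \<noteq> 0"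
      have "Im (w*w) = 0" using w2 by simp
      hence "Re w = 0" using ni by simp
      moreover have "Re (w*w) \<ge> 0" using w2 D' by simp
      ultimately show False using ni by (auto simp: mult_le_0_iff)
    qed
    thus "Im z = 0" by (simp add: w_def)
  qed
qed

lemma disc_swap: "disc A \<ge> 0 \<or> disc (swap_rows A) \<ge> 0"
proof -
  have s1: "swap_rows A $ 1 = A $ 2" and s2: "swap_rows A $ 2 = A $ 1"
    using one_ne_two2 by (auto simp: swap_rows_def)
  have "disc A + disc (swap_rows A) = (A$1$1 + A$2$2)^2 + (A$1$2 + A$2$1)^2"
    by (simp add: disc_def s1 s2 power2_eq_square algebra_simps)
  moreover have "(A$1$1 + A$2$2)^2 + (A$1$2 + A$2$1)^2 \<ge> 0" by simp
  ultimately show ?thesis by linarith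
qed

lemma cont_disc: "continuous_on UNIV disc"
  unfolding disc_def by (intro continuous_intros)

lemma cont_swap: "continuous_on UNIV swap_rows"
  unfolding swap_rows_def by (intro continuous_intros)

theorem mainTheorem19:
  fixes P :: "'w measure" and X :: "'w \<Rightarrow> real^2^2"
  assumes "prob_space P"
    and "X \<in> borel_measurable P"
    and "distr P borel X = distr P borel (\<lambda>\<omega>. swap_rows (X \<omega>))"
  shows "measure P {\<omega> \<in> space P. real_eigenvalues (X \<omega>)} \<ge> 1/2"
proof -
  interpret prob_space P by fact
  define S where "S = {A::real^2^2. real_eigenvalues A}"
  have S': "S = {A. (\<lambda>_. 0) A \<le> disc A}" by (auto simp: S_def real_eigenvalues_iff)
  have Sb: "S \<in> sets borel"
    unfolding S' by (intro borel_closed closed_Collect_le continuous_on_const cont_disc)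
  have sm: "swap_rows \<in> borel_measurable borel"
    using cont_swap by (intro borel_measurable_continuous_onI) 
  have Xs: "(\<lambda>\<omega>. swap_rows (X \<omega>)) \<in> borel_measurable P"
    using measurable_comp[OF assms(2) sm] by (simp add: comp_def)
  define E1 where "E1 = {\<omega> \<in> space P. real_eigenvalues (X \<omega>)}"
  define E2 where "E2 = {\<omega> \<in> space P. real_eigenvalues (swap_rows (X \<omega>))}"
  have E1': "E1 = X -` S \<inter> space P" by (auto simp: E1_def S_def)
  have E2': "E2 = (\<lambda>\<omega>. swap_rows (X \<omega>)) -` S \<inter> space P" by (auto simp: E2_def S_def)
  have m1: "measure P E1 = measure (distr P borel X) S"
    unfolding E1' by (rule measure_distr[symmetric, OF assms(2) Sb])
  have m2: "measure P E2 = measure (distr P borel (\<lambda>\<omega>. swap_rows (X \<omega>))) S"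
    unfolding E2' by (rule measure_distr[symmetric, OF Xs Sb])
  have eq: "measure P E1 = measure P E2" using m1 m2 assms(3) by simp
  have E1s: "E1 \<in> sets P" unfolding E1' using assms(2) Sb by (rule measurable_sets)
  have E2s: "E2 \<in> sets P" unfolding E2' using Xs Sb by (rule measurable_sets)
  have U: "E1 \<union> E2 = space P"
    using disc_swap by (auto simp: E1_def E2_def real_eigenvalues_iff)
  have "1 = measure P (E1 \<union> E2)" using U prob_space by simp
  also have "\<dots> \<le> measure P E1 + measure P E2"
    using E1s E2s by (intro measure_Un_le) auto
  finally show ?thesis using eq by (simp add: E1_def)
qed

end
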